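(* Let $\Omega\subseteq\mathcal C(A)$ be a convex subshift over a finite alphabet $A$, and let $n,R\ge1$. (i) For any $R'$-ball $B\in\mathcal B_{R'}(\mathcal C)$ with $n<R'$ and any $\xi\in\mathcal C$: $\xi^{R'}=B$ if and only if $\phi_n(\xi)^{R'-n}=B^{[n]}$. (ii) $\mathcal B_R(\Omega^{[n]})=\{B^{[n]}:B\in\mathcal B_{R+n}(\Omega)\}$. (iii) If $\Omega$ is $R$-step and $n<R$, then $\Omega^{[n]}$ is $(R-n)$-step; in particular $\Omega^{[R-1]}$ is $1$-step.
   Context: Convex subshifts. Let $A$ be a finite alphabet, $\mathbb F=\mathbb F(A)$. $\mathcal C=\mathcal C(A)$ is the set of subsets $\xi\subseteq\mathbb F$ with $1\in\xi$ that are right-convex: whenever a reduced word $a_m^{\varepsilon_m}\cdots a_1^{\varepsilon_1}$ ($a_i\in A$, $\varepsilon_i=\pm1$) lies in $\xi$, so does $a_k^{\varepsilon_k}\cdots a_1^{\varepsilon_1}$ for all $k<m$; topology from $\{0,1\}^{\mathbb F}$. Full convex shift: partial action of $\mathbb F$ on $\mathcal C$ with domains $\mathcal C_\alpha=\{\xi:\alpha^{-1}\in\xi\}$, $\alpha.\xi=\xi\alpha^{-1}$ for $\alpha\in\xi$. A convex subshift is the restriction to a closed invariant $\Omega\subseteq\mathcal C$. An $n$-ball is $B\in\mathcal C$ with all $|\alpha|\le n$, together with radius $n$; $\xi^n=\{\alpha\in\xi:|\alpha|\le n\}$; $\mathcal B_n(\Omega)=\{\xi^n:\xi\in\Omega\}$.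 For an $n$-ball $B$, $\xi\not\equiv B$ means $(\alpha.\xi)^n\ne B$ for all $\alpha\in\xi$; $\Omega^{\mathcal F}=\{\xi\in\mathcal C:\xi\not\equiv B\ \forall B\in\mathcal F\}$. $\Omega$ is $R$-step if $\Omega=\Omega^{\mathcal F}$ for a finite set $\mathcal F$ of $R$-balls (equivalently, $\xi\in\mathcal C$ lies in $\Omega$ iff $(\alpha.\xi)^R\in\mathcal B_R(\Omega)$ for all $\alpha\in\xi$). $n$-ball subshift: for a convex subshift $\Omega$, let $A^{[n:\Omega]}$ be the finite set of formal symbols $[(a.\xi)^n\xleftarrow{a}\xi^n]$ with $\xi\in\Omega$, $a\in A$, $a\in\xi$ (a symbol $[B\xleftarrow{a}B']$ is determined by the triple $(B,a,B')$), and set $[B'\xleftarrow{a^{-1}}B]:=[B\xleftarrow{a}B']^{-1}$ in the free group $\mathbb F^{[n:\Omega]}=\mathbb F(A^{[n:\Omega]})$. For $\xi\in\mathcal C$ and $\alpha=s_m\cdots s_1\in\xi$ reduced ($s_i\in A\cup A^{-1}$), put $B_k=((s_k\cdots s_1).\xi)^n$ and $\phi_n(\xi,\alpha)=[B_m\xleftarrow{s_m}B_{m-1}]\cdots[B_1\xleftarrow{s_1}B_0]$, $\phi_n(\xi,1)=1$, $\phi_n(\xi)=\{\phi_n(\xi,\alpha):\alpha\in\xi\}$. The $n$-ball subshift $\theta^{[n]}$ is the restriction of the full convex shift on $A^{[n:\Omega]}$ to $\Omega^{[n]}:=\phi_n(\Omega)$. For an $R'$-ball $B\in\mathcal B_{R'}(\mathcal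 C)$ and $n<R'$, $B^{[n]}:=\phi_n(B)^{R'-n}=\{\phi_n(B,\alpha):\alpha\in B,|\alpha|\le R'-n\}$, regarded as an $(R'-n)$-ball. *)

theory Defs
  imports Main
begin

(* Letters of F(A): (a, True) = a, (a, False) = a^{-1}.
   A reduced word  s_m ... s_1  (s_1 rightmost) is stored as the list [s_1, ..., s_m],
   so the right-convex "prefixes" s_k ... s_1 are exactly  take k. *)
type_synonym 'a letter = "'a \<times> bool"
type_synonym 'a word = "'a letter list"

definition inv_letter :: "'a letter \<Rightarrow> 'a letter" where
  "inv_letter x = (fst x, \<not> snd x)"

fun reduced :: "'a word \<Rightarrow> bool" where
  "reduced (x # y # ys) = (y \<noteq> inv_letter x \<and> reduced (y # ys))"
| "reduced _ = True"

(* the free group F(A) as the set of reduced words over A *)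
definition FW :: "'a set \<Rightarrow> 'a word set" where
  "FW A = {w. reduced w \<and> fst ` set w \<subseteq> A}"

(* push a letter onto the right end of the word (head of the list), with cancellation *)
fun cons_red :: "'a letter \<Rightarrow> 'a word \<Rightarrow> 'a word" where
  "cons_red x [] = [x]"
| "cons_red x (y # ys) = (if y = inv_letter x then ys else x # y # ys)"

(* group product u * v in F *)
definition mult :: "'a word \<Rightarrow> 'a word \<Rightarrow> 'a word" where
  "mult u v = foldr cons_red v u"

definition inv_word :: "'a word \<Rightarrow> 'a word" where
  "inv_word w = rev (map inv_letter w)"

definition convex :: "'a word set \<Rightarrow> bool" where
  "convex \<xi> \<longleftrightarrow> (\<forall>w\<in>\<xi>. \<forall>k. take k w \<in> \<xi>)"

definition CC :: "'a set \<Rightarrow> 'a word set set" where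
  "CC A = {\<xi>. [] \<in> \<xi> \<and> \<xi> \<subseteq> FW A \<and> convex \<xi>}"

definition act :: "'a word \<Rightarrow> 'a word set \<Rightarrow> 'a word set" where
  "act \<alpha> \<xi> = (\<lambda>\<beta>. mult \<beta> (inv_word \<alpha>)) ` \<xi>"

(* closedness in the product topology of {0,1}^F (basic opens = cylinders on finite sets) *)
definition closed_C :: "'a set \<Rightarrow> 'a word set set \<Rightarrow> bool" where
  "closed_C A \<Omega> \<longleftrightarrow> (\<forall>\<xi>. \<xi> \<subseteq> FW A \<longrightarrow> \<xi> \<notin> \<Omega> \<longrightarrow>
      (\<exists>S. finite S \<and> (\<forall>\<eta>. \<eta> \<subseteq> FW A \<longrightarrow> \<eta> \<inter> S = \<xi> \<inter> S \<longrightarrow> \<eta> \<notin> \<Omega>)))"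

definition invariant :: "'a word set set \<Rightarrow> bool" where
  "invariant \<Omega> \<longleftrightarrow> (\<forall>\<xi>\<in>\<Omega>. \<forall>\<alpha>\<in>\<xi>. act \<alpha> \<xi> \<in> \<Omega>)"

definition convex_subshift :: "'a set \<Rightarrow> 'a word set set \<Rightarrow> bool" where
  "convex_subshift A \<Omega> \<longleftrightarrow> \<Omega> \<subseteq> CC A \<and> closed_C A \<Omega> \<and> invariant \<Omega>"

definition trunc :: "nat \<Rightarrow> 'a word set \<Rightarrow> 'a word set" where
  "trunc n \<xi> = {\<alpha> \<in> \<xi>. length \<alpha> \<le> n}"

definition balls :: "nat \<Rightarrow> 'a word set set \<Rightarrow> 'a word set set" where
  "balls n \<Omega> = trunc n ` \<Omega>"

definition is_ball :: "'a set \<Rightarrow> nat \<Rightarrow> 'a word set \<Rightarrow> bool" where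
  "is_ball A n B \<longleftrightarrow> B \<in> CC A \<and> (\<forall>\<alpha>\<in>B. length \<alpha> \<le> n)"

definition avoids :: "nat \<Rightarrow> 'a word set \<Rightarrow> 'a word set \<Rightarrow> bool" where
  "avoids n \<xi> B \<longleftrightarrow> (\<forall>\<alpha>\<in>\<xi>. trunc n (act \<alpha> \<xi>) \<noteq> B)"

definition Omega_F :: "'a set \<Rightarrow> nat \<Rightarrow> 'a word set set \<Rightarrow> 'a word set set" where
  "Omega_F A n Fs = {\<xi> \<in> CC A. \<forall>B\<in>Fs. avoids n \<xi> B}"

definition R_step :: "'a set \<Rightarrow> nat \<Rightarrow> 'a word set set \<Rightarrow> bool" where
  "R_step A R \<Omega> \<longleftrightarrow> (\<exists>Fs. finite Fs \<and> (\<forall>B\<in>Fs. is_ball A R B) \<and> \<Omega> = Omega_F A R Fs)"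

(* formal symbols [B <-a- B'] are the triples (B, a, B') *)
type_synonym 'a sym = "'a word set \<times> 'a \<times> 'a word set"

definition sym_alph :: "'a set \<Rightarrow> nat \<Rightarrow> 'a word set set \<Rightarrow> 'a sym set" where
  "sym_alph A n \<Omega> = {(trunc n (act [(a, True)] \<xi>), a, trunc n \<xi>) | \<xi> a.
       \<xi> \<in> \<Omega> \<and> a \<in> A \<and> [(a, True)] \<in> \<xi>}"

(* the letter [B <-s- B'] for s in A \<union> A^{-1}; [B' <-a^{-1}- B] := [B <-a- B']^{-1} *)
definition sym_letter :: "'a letter \<Rightarrow> 'a word set \<Rightarrow> 'a word set \<Rightarrow> 'a sym letter" where
  "sym_letter s B B' = (if snd s then ((B, fst s, B'), True) else ((B', fst s, B), False))"

(* phi_n(xi, alpha): the k-th letter (k = i+1) is [B_k <-s_k- B_{k-1}] *)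
definition phi :: "nat \<Rightarrow> 'a word set \<Rightarrow> 'a word \<Rightarrow> 'a sym word" where
  "phi n \<xi> \<alpha> = map (\<lambda>i. sym_letter (\<alpha> ! i)
        (trunc n (act (take (Suc i) \<alpha>) \<xi>)) (trunc n (act (take i \<alpha>) \<xi>))) [0..<length \<alpha>]"

definition phi_set :: "nat \<Rightarrow> 'a word set \<Rightarrow> 'a sym word set" where
  "phi_set n \<xi> = phi n \<xi> ` \<xi>"

definition ball_shift :: "nat \<Rightarrow> 'a word set set \<Rightarrow> 'a sym word set set" where
  "ball_shift n \<Omega> = phi_set n ` \<Omega>"

definition ball_lift :: "nat \<Rightarrow> nat \<Rightarrow> 'a word set \<Rightarrow> 'a sym word set" where
  "ball_lift n R' B = {phi n B \<alpha> | \<alpha>. \<alpha> \<in> B \<and> length \<alpha> \<le> R' - n}"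

end

theory Submission
  imports Defs
begin


lemma inv_inv[simp]: "inv_letter (inv_letter x) = x"
  by (simp add: inv_letter_def)
lemma inv_neq[simp]: "inv_letter x \<noteq> x" "x \<noteq> inv_letter x"
  by (auto simp: inv_letter_def prod_eq_iff)
lemma inv_eq_iff: "(inv_letter x = y) = (x = inv_letter y)"
  by auto
lemma fst_inv[simp]: "fst (inv_letter x) = fst x"
  by (simp add: inv_letter_def)

lemma reduced_Cons: "reduced (x # ys) = (reduced ys \<and> (ys \<noteq> [] \<longrightarrow> hd ys \<noteq> inv_letter x))"
  by (cases ys) auto

lemma reduced_tl: "reduced xs \<Longrightarrow> reduced (tl xs)"
  by (cases xs) (auto simp: reduced_Cons)

lemma reduced_append: "reduced (xs @ ys) = (reduced xs \<and> reduced ys \<and>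
   (xs \<noteq> [] \<longrightarrow> ys \<noteq> [] \<longrightarrow> hd ys \<noteq> inv_letter (last xs)))"
  by (induction xs) (auto simp: reduced_Cons)

lemma reduced_snoc: "reduced (xs @ [y]) = (reduced xs \<and> (xs \<noteq> [] \<longrightarrow> y \<noteq> inv_letter (last xs)))"
  by (simp add: reduced_append)

lemma reduced_take: "reduced xs \<Longrightarrow> reduced (take k xs)"
  by (metis append_take_drop_id reduced_append)
lemma reduced_drop: "reduced xs \<Longrightarrow> reduced (drop k xs)"
  by (metis append_take_drop_id reduced_append)
lemma reduced_butlast: "reduced xs \<Longrightarrow> reduced (butlast xs)"
  by (simp add: butlast_conv_take reduced_take)

lemma reduced_map:
  assumes "\<And>x. f (inv_letter x) = inv_letter (f x)" "reduced (map f w)"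
  shows "reduced w"
  using assms(2)
proof (induction w rule: reduced.induct)
  case (1 x y ys)
  then show ?case using assms(1) by (metis list.simps(9) reduced.simps(1))
qed auto

lemma reduced_cons_red: "reduced z \<Longrightarrow> reduced (cons_red x z)"
  by (cases z) (auto simp: reduced_Cons)

lemma reduced_foldr: "reduced u \<Longrightarrow> reduced (foldr cons_red w u)"
  by (induction w) (auto simp: reduced_cons_red)

lemma reduced_mult: "reduced u \<Longrightarrow> reduced (mult u v)"
  by (simp add: mult_def reduced_foldr)

lemma cons_red_cancel: "reduced q \<Longrightarrow> cons_red x (cons_red (inv_letter x) q) = q"
proof (cases q)
  case (Cons y zs)
  assume r: "reduced q"
  show ?thesis
  proof (cases "y = x")
    case True
    then show ?thesis using r Cons by (cases zs) (auto simp: reduced_Cons)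
  qed (use Cons in auto)
qed simp

lemma foldr_cons_red_K:
  assumes "reduced z" "reduced u"
  shows "foldr cons_red (cons_red x z) u = cons_red x (foldr cons_red z u)"
proof (cases z)
  case (Cons y zs)
  show ?thesis
  proof (cases "y = inv_letter x")
    case True
    have "reduced (foldr cons_red zs u)" using assms reduced_foldr by blast
    then show ?thesis using True Cons by (simp add: cons_red_cancel)
  qed (use Cons in auto)
qed simp

lemma foldr_foldr:
  assumes "reduced u" "reduced v"
  shows "foldr cons_red (foldr cons_red w v) u = foldr cons_red (w @ v) u"
  using assms
proof (induction w)
  case (Cons x w)
  have "reduced (foldr cons_red w v)" using Cons reduced_foldr by blast
  then show ?case using Cons by (simp add: foldr_cons_red_K)
qed simp

lemma mult_assoc:
  assumes "reduced u" "reduced v"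
  shows "mult (mult u v) w = mult u (mult v w)"
  using assms by (simp add: mult_def foldr_foldr)

lemma mult_Nil_right[simp]: "mult u [] = u"
  by (simp add: mult_def)

lemma foldr_reduced_Nil: "reduced q \<Longrightarrow> foldr cons_red q [] = q"
proof (induction q)
  case (Cons x q)
  then show ?case by (cases q) (auto simp: reduced_Cons)
qed simp

lemma mult_Nil_left[simp]: "reduced q \<Longrightarrow> mult [] q = q"
  by (simp add: mult_def foldr_reduced_Nil)

lemma mult_inv_right: "mult p (inv_word p) = []"
proof (induction p)
  case (Cons x p)
  have "mult (x # p) (inv_word (x # p)) = foldr cons_red (inv_word p @ [inv_letter x]) (x # p)"
    by (simp add: mult_def inv_word_def)
  also have "\<dots> = foldr cons_red (inv_word p) p"
    by (simp add: foldr_append)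
  finally show ?case using Cons by (simp add: mult_def)
qed (simp add: inv_word_def)

lemma inv_word_inv[simp]: "inv_word (inv_word p) = p"
  by (simp add: inv_word_def rev_map comp_def)

lemma mult_inv_left: "mult (inv_word p) p = []"
  using mult_inv_right[of "inv_word p"] by simp

lemma inv_word_eq_Nil[simp]: "(inv_word p = []) = (p = [])"
  by (simp add: inv_word_def)

lemma reduced_inv_word: "reduced p \<Longrightarrow> reduced (inv_word p)"
proof (induction p)
  case (Cons x p)
  have r: "reduced (inv_word p)" using Cons reduced_tl by fastforce
  have "p \<noteq> [] \<Longrightarrow> last (inv_word p) = inv_letter (hd p)"
    by (simp add: inv_word_def last_rev hd_map)
  moreover have "inv_word (x # p) = inv_word p @ [inv_letter x]" by (simp add: inv_word_def)
  moreover have h: "p \<noteq> [] \<Longrightarrow> hd p \<noteq> inv_letter x" using Cons.prems by (simp add: reduced_Cons)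
  ultimately show ?case using r
    by (simp add: reduced_snoc) (metis inv_inv)
qed (auto simp: inv_word_def)

lemma length_inv_word[simp]: "length (inv_word p) = length p"
  by (simp add: inv_word_def)

lemma inv_mult:
  assumes "reduced u" "reduced v"
  shows "inv_word (mult v u) = mult (inv_word u) (inv_word v)"
proof -
  let ?p = "mult v u" and ?q = "mult (inv_word u) (inv_word v)"
  have ru: "reduced (inv_word u)" "reduced (inv_word v)" using assms reduced_inv_word by auto
  have rp: "reduced ?p" using assms reduced_mult by blast
  have rq: "reduced ?q" using ru reduced_mult by blast
  have "mult ?p ?q = mult v (mult u (mult (inv_word u) (inv_word v)))"
    using assms by (simp add: mult_assoc)
  also have "\<dots> = mult v (mult (mult u (inv_word u)) (inv_word v))"
    using assms ru by (simp add: mult_assoc)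
  also have "\<dots> = []" using ru assms by (simp add: mult_inv_right)
  finally have 1: "mult ?p ?q = []" .
  have "inv_word ?p = mult (inv_word ?p) (mult ?p ?q)" using 1 by simp
  also have "\<dots> = mult (mult (inv_word ?p) ?p) ?q"
    by (simp add: mult_assoc[OF reduced_inv_word[OF rp] rp])
  also have "\<dots> = ?q" using rq by (simp add: mult_inv_left)
  finally show ?thesis .
qed

lemma mult_snoc_formula:
  assumes "reduced v"
  shows "mult [l] v = (if v \<noteq> [] \<and> last v = inv_letter l then butlast v else v @ [l])"
  using assms
proof (induction v)
  case Nil then show ?case by (simp add: mult_def)
next
  case (Cons y v')
  have IH: "mult [l] v' = (if v' \<noteq> [] \<and> last v' = inv_letter l then butlast v' else v' @ [l])"
    using Cons reduced_tl by fastforce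
  have eq: "mult [l] (y # v') = cons_red y (mult [l] v')" by (simp add: mult_def)
  show ?case
  proof (cases "v' = []")
    case True
    have "(l = inv_letter y) = (y = inv_letter l)" by auto
    then show ?thesis using eq True by (simp add: mult_def)
  next
    case False
    have h: "hd v' \<noteq> inv_letter y" using Cons False by (simp add: reduced_Cons)
    show ?thesis
    proof (cases "last v' = inv_letter l")
      case True
      have hb: "butlast v' \<noteq> [] \<Longrightarrow> hd (butlast v') = hd v'" by (cases v') auto
      have "mult [l] (y # v') = cons_red y (butlast v')" using eq IH False True by simp
      also have "\<dots> = y # butlast v'"
        using h hb by (cases "butlast v'") auto
      finally show ?thesis using False True by simp
    next
      case False2: False
      have "mult [l] (y # v') = cons_red y (v' @ [l])" using eq IH False False2 by simp
      also have "\<dots> = y # v' @ [l]" using h False by (cases v') auto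
      finally show ?thesis using False False2 by simp
    qed
  qed
qed

lemma mult_append_reduced: "reduced (v @ u) \<Longrightarrow> mult u v = v @ u"
proof (induction v)
  case (Cons x v)
  have r: "reduced (v @ u)" using Cons.prems reduced_tl by fastforce
  have h: "v @ u \<noteq> [] \<Longrightarrow> hd (v @ u) \<noteq> inv_letter x"
    using Cons.prems by (simp add: reduced_Cons)
  have "mult u (x # v) = cons_red x (mult u v)" by (simp add: mult_def)
  also have "\<dots> = cons_red x (v @ u)" using Cons.IH r by simp
  also have "\<dots> = x # v @ u" using h by (cases "v @ u") auto
  finally show ?case by simp
qed (simp add: reduced_append)

lemma set_cons_red: "set (cons_red x z) \<subseteq> insert x (set z)"
  by (cases z) auto
lemma set_foldr: "set (foldr cons_red w u) \<subseteq> set w \<union> set u"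
proof (induction w)
  case (Cons a w)
  then show ?case using set_cons_red[of a "foldr cons_red w u"] by auto
qed simp
lemma set_mult: "set (mult u v) \<subseteq> set u \<union> set v"
  using set_foldr[of v u] by (auto simp: mult_def)

lemma length_cons_red: "length (cons_red x z) \<le> Suc (length z)"
  by (cases z) auto
lemma length_mult: "length (mult u v) \<le> length u + length v"
  unfolding mult_def
proof (induction v)
  case (Cons a v)
  have "length (cons_red a (foldr cons_red v u)) \<le> Suc (length (foldr cons_red v u))"
    by (rule length_cons_red)
  then show ?case using Cons.IH by simp
qed simp

lemma FW_mult: "u \<in> FW A \<Longrightarrow> v \<in> FW A \<Longrightarrow> mult u v \<in> FW A"
proof -
  assume a: "u \<in> FW A" "v \<in> FW A"
  have "set (mult u v) \<subseteq> set u \<union> set v" by (rule set_mult)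
  then have "fst ` set (mult u v) \<subseteq> A" using a unfolding FW_def by blast
  moreover have "reduced (mult u v)" using a by (intro reduced_mult) (simp add: FW_def)
  ultimately show ?thesis unfolding FW_def by simp
qed

lemma FW_inv: "u \<in> FW A \<Longrightarrow> inv_word u \<in> FW A"
  unfolding FW_def using reduced_inv_word[of u] by (auto simp: inv_word_def)

lemma FW_take: "u \<in> FW A \<Longrightarrow> take k u \<in> FW A"
  unfolding FW_def using reduced_take[of u k] set_take_subset[of k u] by blast
lemma FW_drop: "u \<in> FW A \<Longrightarrow> drop k u \<in> FW A"
  unfolding FW_def using reduced_drop[of u k] set_drop_subset[of k u] by blast

lemma act_mem:
  assumes "\<alpha> \<in> FW A" "\<xi> \<subseteq> FW A"
  shows "\<gamma> \<in> act \<alpha> \<xi> \<longleftrightarrow> \<gamma> \<in> FW A \<and> mult \<gamma> \<alpha> \<in> \<xi>"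
proof
  assume "\<gamma> \<in> act \<alpha> \<xi>"
  then obtain \<beta> where b: "\<beta> \<in> \<xi>" "\<gamma> = mult \<beta> (inv_word \<alpha>)" by (auto simp: act_def)
  have "\<beta> \<in> FW A" using b assms by auto
  then have "\<gamma> \<in> FW A" using b FW_mult FW_inv assms by blast
  moreover have "mult \<gamma> \<alpha> = \<beta>" using b \<open>\<beta> \<in> FW A\<close> assms
    by (simp add: mult_assoc FW_def reduced_inv_word mult_inv_left)
  ultimately show "\<gamma> \<in> FW A \<and> mult \<gamma> \<alpha> \<in> \<xi>" using b by simp
next
  assume h: "\<gamma> \<in> FW A \<and> mult \<gamma> \<alpha> \<in> \<xi>"
  have "mult (mult \<gamma> \<alpha>) (inv_word \<alpha>) = \<gamma>" using h assms
    by (simp add: mult_assoc FW_def mult_inv_right)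
  then show "\<gamma> \<in> act \<alpha> \<xi>" using h unfolding act_def by (metis image_eqI)
qed

lemma act_FW: "\<alpha> \<in> FW A \<Longrightarrow> \<xi> \<subseteq> FW A \<Longrightarrow> act \<alpha> \<xi> \<subseteq> FW A"
  using act_mem by blast

lemma act_Nil[simp]: "act [] \<xi> = \<xi>"
  by (simp add: act_def inv_word_def)

lemma act_act:
  assumes "u \<in> FW A" "v \<in> FW A" "\<xi> \<subseteq> FW A"
  shows "act v (act u \<xi>) = act (mult v u) \<xi>"
proof -
  have "\<And>\<beta>. \<beta> \<in> \<xi> \<Longrightarrow> mult (mult \<beta> (inv_word u)) (inv_word v) = mult \<beta> (inv_word (mult v u))"
    using assms by (auto simp: FW_def inv_mult mult_assoc reduced_inv_word)
  then show ?thesis by (auto simp: act_def image_image)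
qed




definition pl :: "'a sym letter \<Rightarrow> 'a letter" where
  "pl l = (fst (snd (fst l)), snd l)"

lemma pl_sym[simp]: "pl (sym_letter s B B') = s"
  by (cases s) (simp add: pl_def sym_letter_def)

lemma pl_inv[simp]: "pl (inv_letter l) = inv_letter (pl l)"
  by (simp add: pl_def inv_letter_def)

lemma inv_sym: "inv_letter (sym_letter s X Y) = sym_letter (inv_letter s) Y X"
  by (simp add: sym_letter_def inv_letter_def)

lemma sym_letter_inj: "sym_letter s X Y = sym_letter s X' Y' \<Longrightarrow> X = X' \<and> Y = Y'"
  by (simp add: sym_letter_def split: if_splits)

lemma length_phi[simp]: "length (phi n \<xi> \<alpha>) = length \<alpha>"
  by (simp add: phi_def)

lemma phi_nth: "i < length \<alpha> \<Longrightarrow> phi n \<xi> \<alpha> ! i =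
   sym_letter (\<alpha> ! i) (trunc n (act (take (Suc i) \<alpha>) \<xi>)) (trunc n (act (take i \<alpha>) \<xi>))"
  by (simp add: phi_def)

lemma map_pl_phi[simp]: "map pl (phi n \<xi> \<alpha>) = \<alpha>"
  by (rule nth_equalityI) (auto simp: phi_nth)

lemma phi_Nil[simp]: "phi n \<xi> [] = []"
  by (simp add: phi_def)

lemma phi_take: "take k (phi n \<xi> \<alpha>) = phi n \<xi> (take k \<alpha>)"
proof (rule nth_equalityI)
  fix i assume "i < length (take k (phi n \<xi> \<alpha>))"
  then have i: "i < k" "i < length \<alpha>" by auto
  have e: "take (Suc i) (take k \<alpha>) = take (Suc i) \<alpha>" "take i (take k \<alpha>) = take i \<alpha>"
    using i by (auto simp: min_def)
  show "take k (phi n \<xi> \<alpha>) ! i = phi n \<xi> (take k \<alpha>) ! i"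
    using i by (simp add: phi_nth e)
qed simp

lemma phi_snoc: "phi n \<xi> (\<alpha> @ [s]) = phi n \<xi> \<alpha> @ [sym_letter s (trunc n (act (\<alpha> @ [s]) \<xi>)) (trunc n (act \<alpha> \<xi>))]"
  by (rule nth_equalityI) (auto simp: phi_nth nth_append less_Suc_eq)

lemma phi_inj: "phi n \<xi> \<alpha> = phi n \<eta> \<beta> \<Longrightarrow> \<alpha> = \<beta>"
  by (metis map_pl_phi)

lemma reduced_phi: "reduced \<alpha> \<Longrightarrow> reduced (phi n \<xi> \<alpha>)"
  by (rule reduced_map[of pl]) auto

lemma phi_cong: "(\<And>i. i \<le> length \<alpha> \<Longrightarrow> trunc n (act (take i \<alpha>) \<xi>) = trunc n (act (take i \<alpha>) \<eta>))
   \<Longrightarrow> phi n \<xi> \<alpha> = phi n \<eta> \<alpha>"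
  by (rule nth_equalityI) (auto simp: phi_nth)

lemma trunc_sub: "trunc n X \<subseteq> X"
  by (auto simp: trunc_def)

lemma trunc_act_trunc:
  assumes "\<eta> \<subseteq> FW A" "\<alpha> \<in> FW A" "length \<alpha> + n \<le> R'"
  shows "trunc n (act \<alpha> (trunc R' \<eta>)) = trunc n (act \<alpha> \<eta>)"
proof -
  have s: "trunc R' \<eta> \<subseteq> FW A" using assms trunc_sub by blast
  have "\<And>\<gamma>. length \<gamma> \<le> n \<Longrightarrow> length (mult \<gamma> \<alpha>) \<le> R'"
    using length_mult assms(3) by (metis add.commute add_le_mono le_trans order_refl)
  then show ?thesis
    using act_mem[OF assms(2) s] act_mem[OF assms(2) assms(1)]
    by (auto simp: trunc_def)
qed

lemma phi_trunc:
  assumes "\<eta> \<subseteq> FW A" "\<alpha> \<in> FW A" "length \<alpha> + n \<le> R'"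
  shows "phi n (trunc R' \<eta>) \<alpha> = phi n \<eta> \<alpha>"
proof (rule phi_cong)
  fix i assume "i \<le> length \<alpha>"
  show "trunc n (act (take i \<alpha>) (trunc R' \<eta>)) = trunc n (act (take i \<alpha>) \<eta>)"
    using assms by (intro trunc_act_trunc) (auto simp: FW_take)
qed

lemma CC_FW: "\<xi> \<in> CC A \<Longrightarrow> \<xi> \<subseteq> FW A"
  by (simp add: CC_def)

lemma ball_lift_trunc:
  assumes "\<eta> \<subseteq> FW A" "n \<le> R'"
  shows "ball_lift n R' (trunc R' \<eta>) = trunc (R' - n) (phi_set n \<eta>)"
proof -
  have "\<And>\<alpha>. \<alpha> \<in> \<eta> \<Longrightarrow> length \<alpha> \<le> R' - n \<Longrightarrow> phi n (trunc R' \<eta>) \<alpha> = phi n \<eta> \<alpha>"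
    using assms by (intro phi_trunc[of _ A]) auto
  then show ?thesis using assms(2)
    unfolding ball_lift_def trunc_def phi_set_def by force
qed

lemma convexD: "convex \<xi> \<Longrightarrow> w \<in> \<xi> \<Longrightarrow> take k w \<in> \<xi>"
  by (simp add: convex_def)

lemma sym_half:
  assumes "\<xi> \<in> CC A" "\<eta> \<in> CC A" "n < R'"
    and eq: "trunc (R' - n) (phi_set n \<xi>) = trunc (R' - n) (phi_set n \<eta>)"
  shows "trunc R' \<xi> \<subseteq> \<eta>"
proof
  fix \<gamma> assume "\<gamma> \<in> trunc R' \<xi>"
  then have g: "\<gamma> \<in> \<xi>" "length \<gamma> \<le> R'" by (auto simp: trunc_def)
  have xiF: "\<xi> \<subseteq> FW A" "\<eta> \<subseteq> FW A" using assms CC_FW by auto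
  have cx: "convex \<xi>" using assms by (simp add: CC_def)
  have key: "\<And>\<alpha>. \<alpha> \<in> \<xi> \<Longrightarrow> length \<alpha> \<le> R' - n \<Longrightarrow> \<alpha> \<in> \<eta> \<and> phi n \<xi> \<alpha> = phi n \<eta> \<alpha>"
  proof -
    fix \<alpha> assume a: "\<alpha> \<in> \<xi>" "length \<alpha> \<le> R' - n"
    then have "phi n \<xi> \<alpha> \<in> trunc (R' - n) (phi_set n \<xi>)" by (auto simp: trunc_def phi_set_def)
    then have "phi n \<xi> \<alpha> \<in> phi_set n \<eta>" using eq trunc_sub by blast
    then obtain \<beta> where "\<beta> \<in> \<eta>" "phi n \<xi> \<alpha> = phi n \<eta> \<beta>" by (auto simp: phi_set_def)
    then show "\<alpha> \<in> \<eta> \<and> phi n \<xi> \<alpha> = phi n \<eta> \<alpha>" using phi_inj by metis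
  qed
  show "\<gamma> \<in> \<eta>"
  proof (cases "length \<gamma> \<le> R' - n")
    case True then show ?thesis using key g by blast
  next
    case False
    define \<alpha> where "\<alpha> = take (R' - n) \<gamma>"
    define \<delta> where "\<delta> = drop (R' - n) \<gamma>"
    have a: "\<alpha> \<in> \<xi>" using cx g convexD \<alpha>_def by blast
    have la: "length \<alpha> = R' - n" using False \<alpha>_def by simp
    have k: "\<alpha> \<in> \<eta>" "phi n \<xi> \<alpha> = phi n \<eta> \<alpha>" using key a la by auto
    have "R' - n - 1 < length \<alpha>" using la assms(3) by simp
    then have "phi n \<xi> \<alpha> ! (R' - n - 1) = phi n \<eta> \<alpha> ! (R' - n - 1)" using k by simp
    then have "trunc n (act (take (Suc (R' - n - 1)) \<alpha>) \<xi>) = trunc n (act (take (Suc (R' - n - 1)) \<alpha>) \<eta>)"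
      using \<open>R' - n - 1 < length \<alpha>\<close> by (simp add: phi_nth) (metis sym_letter_inj)
    moreover have "Suc (R' - n - 1) = length \<alpha>" using la assms(3) by simp
    ultimately have tb: "trunc n (act \<alpha> \<xi>) = trunc n (act \<alpha> \<eta>)" by simp
    have gF: "\<gamma> \<in> FW A" using g xiF by auto
    have aF: "\<alpha> \<in> FW A" "\<delta> \<in> FW A" using gF FW_take FW_drop \<alpha>_def \<delta>_def by auto
    have md: "mult \<delta> \<alpha> = \<gamma>" using gF unfolding \<alpha>_def \<delta>_def FW_def
      by (simp add: mult_append_reduced)
    have "\<delta> \<in> act \<alpha> \<xi>" using act_mem[OF aF(1) xiF(1)] aF md g by simp
    moreover have "length \<delta> \<le> n" using g \<delta>_def by simp
    ultimately have "\<delta> \<in> trunc n (act \<alpha> \<eta>)" using tb by (auto simp: trunc_def)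
    then have "\<delta> \<in> act \<alpha> \<eta>" using trunc_sub by blast
    then show ?thesis using act_mem[OF aF(1) xiF(2)] md by simp
  qed
qed

lemma part_i:
  assumes "B \<in> balls R' (CC A)" "n < R'" "\<xi> \<in> CC A"
  shows "trunc R' \<xi> = B \<longleftrightarrow> trunc (R' - n) (phi_set n \<xi>) = ball_lift n R' B"
proof -
  obtain \<eta> where e: "\<eta> \<in> CC A" "B = trunc R' \<eta>" using assms(1) by (auto simp: balls_def)
  have bl: "ball_lift n R' B = trunc (R' - n) (phi_set n \<eta>)"
    using e assms(2) ball_lift_trunc CC_FW by (metis less_imp_le)
  show ?thesis
  proof
    assume "trunc R' \<xi> = B"
    then show "trunc (R' - n) (phi_set n \<xi>) = ball_lift n R' B"
      using ball_lift_trunc CC_FW assms by (metis less_imp_le)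
  next
    assume h: "trunc (R' - n) (phi_set n \<xi>) = ball_lift n R' B"
    have 1: "trunc R' \<xi> \<subseteq> \<eta>" using sym_half[OF assms(3) e(1) assms(2)] h bl by simp
    have 2: "trunc R' \<eta> \<subseteq> \<xi>" using sym_half[OF e(1) assms(3) assms(2)] h bl by simp
    show "trunc R' \<xi> = B" using 1 2 e(2) by (auto simp: trunc_def)
  qed
qed

lemma part_ii:
  assumes "\<Omega> \<subseteq> CC A"
  shows "balls R (ball_shift n \<Omega>) = ball_lift n (R + n) ` balls (R + n) \<Omega>"
proof -
  have *: "\<And>\<xi>. \<xi> \<in> \<Omega> \<Longrightarrow> ball_lift n (R + n) (trunc (R + n) \<xi>) = trunc R (phi_set n \<xi>)"
  proof -
    fix \<xi> assume "\<xi> \<in> \<Omega>"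
    then have "\<xi> \<subseteq> FW A" using assms CC_FW by blast
    from ball_lift_trunc[OF this, of n "R + n"] show "ball_lift n (R + n) (trunc (R + n) \<xi>) = trunc R (phi_set n \<xi>)"
      by simp
  qed
  have "balls R (ball_shift n \<Omega>) = (\<lambda>\<xi>. trunc R (phi_set n \<xi>)) ` \<Omega>"
    by (simp add: balls_def ball_shift_def image_image)
  also have "\<dots> = (\<lambda>\<xi>. ball_lift n (R + n) (trunc (R + n) \<xi>)) ` \<Omega>"
    using * by (intro image_cong) auto
  also have "\<dots> = ball_lift n (R + n) ` balls (R + n) \<Omega>" by (simp add: balls_def image_image)
  finally show ?thesis .
qed




lemma FW_single: "fst l \<in> A \<Longrightarrow> [l] \<in> FW A"
  by (simp add: FW_def)

lemma FW_reduced: "u \<in> FW A \<Longrightarrow> reduced u"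
  by (simp add: FW_def)

lemma reduced_nth_Suc:
  assumes "reduced \<gamma>" "Suc k < length \<gamma>"
  shows "\<gamma> ! Suc k \<noteq> inv_letter (\<gamma> ! k)"
proof -
  have "drop k \<gamma> = \<gamma> ! k # \<gamma> ! Suc k # drop (Suc (Suc k)) \<gamma>"
    using assms(2) by (metis Cons_nth_drop_Suc Suc_lessD)
  moreover have "reduced (drop k \<gamma>)" using assms(1) reduced_drop by blast
  ultimately show ?thesis by (metis reduced.simps(1))
qed

lemma take_Suc_mult:
  assumes "reduced \<gamma>" "k < length \<gamma>"
  shows "take (Suc k) \<gamma> = mult [\<gamma> ! k] (take k \<gamma>)"
proof -
  have "take (Suc k) \<gamma> = take k \<gamma> @ [\<gamma> ! k]" using assms(2) by (simp add: take_Suc_conv_app_nth)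
  moreover have "reduced (take (Suc k) \<gamma>)" using assms reduced_take by blast
  ultimately show ?thesis using mult_append_reduced by metis
qed

lemma act_convex:
  assumes "\<xi> \<in> CC A" "\<beta> \<in> \<xi>"
  shows "act \<beta> \<xi> \<in> CC A"
proof -
  have xF: "\<xi> \<subseteq> FW A" and cx: "convex \<xi>" using assms(1) by (auto simp: CC_def)
  have bF: "\<beta> \<in> FW A" using xF assms by auto
  have "mult [] \<beta> = \<beta>" using bF FW_reduced mult_Nil_left by blast
  then have nil: "[] \<in> act \<beta> \<xi>" using act_mem[OF bF xF] assms by (simp add: FW_def)
  have sub: "act \<beta> \<xi> \<subseteq> FW A" using act_FW[OF bF xF] .
  have "take k \<gamma> \<in> act \<beta> \<xi>" if g: "\<gamma> \<in> act \<beta> \<xi>" for \<gamma> k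
  proof -
    have gF: "\<gamma> \<in> FW A" and gm: "mult \<gamma> \<beta> \<in> \<xi>" using g act_mem[OF bF xF] by auto
    have rg: "reduced \<gamma>" using gF FW_reduced by blast
    have rb: "reduced \<beta>" using bF FW_reduced by blast
    define x where "x k = mult (take k \<gamma>) \<beta>" for k
    define App where "App k \<longleftrightarrow> x (Suc k) = x k @ [\<gamma> ! k]" for k
    have rx: "reduced (x k)" for k unfolding x_def using rg reduced_take reduced_mult by blast
    have step: "x (Suc k) = mult [\<gamma> ! k] (x k)" if "k < length \<gamma>" for k
    proof -
      have "x (Suc k) = mult (mult [\<gamma> ! k] (take k \<gamma>)) \<beta>"
        unfolding x_def using take_Suc_mult[OF rg that] by simp
      also have "\<dots> = mult [\<gamma> ! k] (x k)" unfolding x_def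
        using mult_assoc[of "[\<gamma> ! k]" "take k \<gamma>" \<beta>] reduced_take[OF rg, of k] by simp
      finally show ?thesis .
    qed
    have nonapp: "x k \<noteq> [] \<and> x (Suc k) = butlast (x k)" if "k < length \<gamma>" "\<not> App k" for k
      using that step[OF that(1)] mult_snoc_formula[OF rx[of k], of "\<gamma> ! k"]
      unfolding App_def by (auto split: if_splits)
    have prp: "App (Suc k)" if "App k" "Suc k < length \<gamma>" for k
    proof -
      have "x (Suc (Suc k)) = mult [\<gamma> ! Suc k] (x k @ [\<gamma> ! k])"
        using step[OF that(2)] that(1) unfolding App_def by simp
      moreover have "\<gamma> ! k \<noteq> inv_letter (\<gamma> ! Suc k)"
        using reduced_nth_Suc[OF rg that(2)] by (metis inv_inv)
      ultimately show ?thesis unfolding App_def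
        using mult_snoc_formula[of "x k @ [\<gamma> ! k]" "\<gamma> ! Suc k"] rx[of "Suc k"] that(1)
        unfolding App_def by (metis last_snoc snoc_eq_iff_butlast)
    qed
    have propall: "App i" if "App j" "j \<le> i" "i < length \<gamma>" for i j
      using that
    proof (induction i)
      case 0 then show ?case by simp
    next
      case (Suc i)
      show ?case
      proof (cases "j = Suc i")
        case True then show ?thesis using Suc by simp
      next
        case False then show ?thesis using Suc prp by auto
      qed
    qed
    have A: "k \<le> length \<beta> \<and> x k = take (length \<beta> - k) \<beta>"
      if "k \<le> length \<gamma>" "\<forall>j<k. \<not> App j" for k
      using that
    proof (induction k)
      case 0 then show ?case unfolding x_def using rb by simp
    next
      case (Suc k)
      then have ih: "k \<le> length \<beta>" "x k = take (length \<beta> - k) \<beta>" by auto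
      have na: "x k \<noteq> []" "x (Suc k) = butlast (x k)" using nonapp Suc.prems by auto
      then have "k < length \<beta>" using ih by auto
      then show ?case using ih na by (simp add: butlast_take)
    qed
    have B: "\<exists>s. x m' = x m @ s" if "\<forall>i. m \<le> i \<longrightarrow> i < length \<gamma> \<longrightarrow> App i" "m \<le> m'" "m' \<le> length \<gamma>"
      for m m'
      using that
    proof (induction m')
      case 0 then show ?case by simp
    next
      case (Suc m')
      show ?case
      proof (cases "m = Suc m'")
        case True then show ?thesis by simp
      next
        case False
        then obtain s where "x m' = x m @ s" using Suc by auto
        moreover have "App m'" using Suc False by auto
        ultimately show ?thesis unfolding App_def by auto
      qed
    qed
    define k' where "k' = min k (length \<gamma>)"
    have tk: "take k \<gamma> = take k' \<gamma>" unfolding k'_def by (simp add: min_def)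
    have k'le: "k' \<le> length \<gamma>" unfolding k'_def by simp
    have "x k' \<in> \<xi>"
    proof (cases "\<forall>j<k'. \<not> App j")
      case True
      then show ?thesis using A[OF k'le] convexD[OF cx assms(2)] by simp
    next
      case False
      then obtain j where j: "j < k'" "App j" by auto
      then have "\<forall>i. k' \<le> i \<longrightarrow> i < length \<gamma> \<longrightarrow> App i" using propall by auto
      then obtain s where "x (length \<gamma>) = x k' @ s" using B k'le by blast
      moreover have "x (length \<gamma>) = mult \<gamma> \<beta>" unfolding x_def by simp
      ultimately show ?thesis using gm convexD[OF cx, of "mult \<gamma> \<beta>" "length (x k')"] by simp
    qed
    moreover have "take k \<gamma> \<in> FW A" using gF FW_take by blast
    ultimately show ?thesis using act_mem[OF bF xF] tk unfolding x_def by simp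
  qed
  then show ?thesis using nil sub by (auto simp: CC_def convex_def)
qed




lemma phi_single: "phi n \<eta> [l] = [sym_letter l (trunc n (act [l] \<eta>)) (trunc n \<eta>)]"
  using phi_snoc[of n \<eta> "[]" l] by simp

lemma phi_last:
  assumes "\<beta> \<noteq> []"
  shows "last (phi n \<xi> \<beta>) = sym_letter (last \<beta>) (trunc n (act \<beta> \<xi>)) (trunc n (act (butlast \<beta>) \<xi>))"
proof -
  obtain b l where "\<beta> = b @ [l]" using assms by (metis rev_exhaust)
  then show ?thesis by (simp add: phi_snoc)
qed

lemma phi_butlast: "phi n \<xi> (butlast \<beta>) = butlast (phi n \<xi> \<beta>)"
  by (simp add: butlast_conv_take phi_take)

lemma cocycle_single:
  assumes "fst l \<in> A" "\<beta> \<in> FW A" "\<xi> \<subseteq> FW A"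
  shows "phi n \<xi> (mult [l] \<beta>) = mult (phi n (act \<beta> \<xi>) [l]) (phi n \<xi> \<beta>)"
proof -
  have lF: "[l] \<in> FW A" using assms FW_single by blast
  have rb: "reduced \<beta>" using assms FW_reduced by blast
  have rp: "reduced (phi n \<xi> \<beta>)" using rb reduced_phi by blast
  have aa: "act [l] (act \<beta> \<xi>) = act (mult [l] \<beta>) \<xi>" using act_act[OF assms(2) lF assms(3)] .
  define L where "L = sym_letter l (trunc n (act (mult [l] \<beta>) \<xi>)) (trunc n (act \<beta> \<xi>))"
  have pL: "phi n (act \<beta> \<xi>) [l] = [L]" unfolding L_def phi_single aa ..
  show ?thesis
  proof (cases "\<beta> \<noteq> [] \<and> last \<beta> = inv_letter l")
    case True
    then have m: "mult [l] \<beta> = butlast \<beta>" using mult_snoc_formula[OF rb] by simp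
    have "last (phi n \<xi> \<beta>) = sym_letter (inv_letter l) (trunc n (act \<beta> \<xi>)) (trunc n (act (butlast \<beta>) \<xi>))"
      using True phi_last by metis
    then have "last (phi n \<xi> \<beta>) = inv_letter L" unfolding L_def m by (simp add: inv_sym)
    moreover have "phi n \<xi> \<beta> \<noteq> []" using True by (metis length_0_conv length_phi)
    ultimately have "mult [L] (phi n \<xi> \<beta>) = butlast (phi n \<xi> \<beta>)"
      using mult_snoc_formula[OF rp] by simp
    then show ?thesis using m pL by (simp add: phi_butlast)
  next
    case False
    then have m: "mult [l] \<beta> = \<beta> @ [l]" using mult_snoc_formula[OF rb, of l] by auto
    have "\<not> (phi n \<xi> \<beta> \<noteq> [] \<and> last (phi n \<xi> \<beta>) = inv_letter L)"
    proof
      assume h: "phi n \<xi> \<beta> \<noteq> [] \<and> last (phi n \<xi> \<beta>) = inv_letter L"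
      then have "\<beta> \<noteq> []" by auto
      then have "pl (last (phi n \<xi> \<beta>)) = last \<beta>" using phi_last by (metis pl_sym)
      then show False using h False unfolding L_def by simp
    qed
    then have "mult [L] (phi n \<xi> \<beta>) = phi n \<xi> \<beta> @ [L]" using mult_snoc_formula[OF rp, of L] by auto
    then show ?thesis using m pL unfolding L_def by (simp add: phi_snoc)
  qed
qed

lemma cocycle:
  assumes "\<gamma> \<in> FW A" "\<beta> \<in> FW A" "\<xi> \<subseteq> FW A"
  shows "phi n \<xi> (mult \<gamma> \<beta>) = mult (phi n (act \<beta> \<xi>) \<gamma>) (phi n \<xi> \<beta>)"
  using assms
proof (induction \<gamma> arbitrary: \<beta> \<xi>)
  case Nil
  then show ?case using FW_reduced reduced_phi by (metis mult_Nil_left phi_Nil)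
next
  case (Cons l \<gamma>r)
  have rg: "reduced (l # \<gamma>r)" using Cons.prems FW_reduced by blast
  have lA: "fst l \<in> A" using Cons.prems by (simp add: FW_def)
  have lF: "[l] \<in> FW A" using lA FW_single by blast
  have grF: "\<gamma>r \<in> FW A" using Cons.prems(1) FW_drop[of "l # \<gamma>r" A 1] by simp
  have rgr: "reduced \<gamma>r" using grF FW_reduced by blast
  have e1: "mult \<gamma>r [l] = l # \<gamma>r" using mult_append_reduced[of "[l]" \<gamma>r] rg by simp
  have b'F: "mult [l] \<beta> \<in> FW A" using lF Cons.prems FW_mult by blast
  have axF: "act \<beta> \<xi> \<subseteq> FW A" using act_FW Cons.prems by blast
  have "mult (l # \<gamma>r) \<beta> = mult \<gamma>r (mult [l] \<beta>)"
    using mult_assoc[of \<gamma>r "[l]" \<beta>] rgr e1 by simp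
  then have "phi n \<xi> (mult (l # \<gamma>r) \<beta>) = mult (phi n (act (mult [l] \<beta>) \<xi>) \<gamma>r) (phi n \<xi> (mult [l] \<beta>))"
    using Cons.IH[OF grF b'F Cons.prems(3)] by simp
  also have "phi n \<xi> (mult [l] \<beta>) = mult (phi n (act \<beta> \<xi>) [l]) (phi n \<xi> \<beta>)"
    using cocycle_single[OF lA Cons.prems(2,3)] .
  also have "act (mult [l] \<beta>) \<xi> = act [l] (act \<beta> \<xi>)" using act_act[OF Cons.prems(2) lF Cons.prems(3)] by simp
  finally have 1: "phi n \<xi> (mult (l # \<gamma>r) \<beta>) =
      mult (phi n (act [l] (act \<beta> \<xi>)) \<gamma>r) (mult (phi n (act \<beta> \<xi>) [l]) (phi n \<xi> \<beta>))" .
  have 2: "phi n (act \<beta> \<xi>) (l # \<gamma>r) = mult (phi n (act [l] (act \<beta> \<xi>)) \<gamma>r) (phi n (act \<beta> \<xi>) [l])"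
    using Cons.IH[OF grF lF axF] e1 by simp
  have r3: "reduced (phi n (act [l] (act \<beta> \<xi>)) \<gamma>r)" "reduced (phi n (act \<beta> \<xi>) [l])"
    using rgr by (simp_all add: reduced_phi)
  show ?case using 1 2 mult_assoc[OF r3] by simp
qed

lemma equivariance:
  assumes "\<xi> \<subseteq> FW A" "\<beta> \<in> \<xi>"
  shows "act (phi n \<xi> \<beta>) (phi_set n \<xi>) = phi_set n (act \<beta> \<xi>)"
proof -
  have bF: "\<beta> \<in> FW A" using assms by auto
  have rb: "reduced \<beta>" using bF FW_reduced by blast
  have *: "mult (phi n \<xi> \<alpha>) (inv_word (phi n \<xi> \<beta>)) = phi n (act \<beta> \<xi>) (mult \<alpha> (inv_word \<beta>))"
    if a: "\<alpha> \<in> \<xi>" for \<alpha>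
  proof -
    define \<gamma> where "\<gamma> = mult \<alpha> (inv_word \<beta>)"
    have "\<gamma> \<in> act \<beta> \<xi>" unfolding \<gamma>_def act_def using a by blast
    then have gF: "\<gamma> \<in> FW A" using act_mem[OF bF assms(1)] by auto
    have ra: "reduced \<alpha>" using a assms(1) FW_reduced by blast
    have ga: "mult \<gamma> \<beta> = \<alpha>" unfolding \<gamma>_def
      using mult_assoc[OF ra reduced_inv_word[OF rb], of \<beta>] mult_inv_left[of \<beta>] by simp
    have "phi n \<xi> \<alpha> = mult (phi n (act \<beta> \<xi>) \<gamma>) (phi n \<xi> \<beta>)"
      using cocycle[OF gF bF assms(1)] ga by simp
    moreover have "reduced (phi n (act \<beta> \<xi>) \<gamma>)" "reduced (phi n \<xi> \<beta>)"
      using FW_reduced[OF gF] rb reduced_phi by auto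
    ultimately show ?thesis unfolding \<gamma>_def by (simp add: mult_assoc mult_inv_right)
  qed
  have "act (phi n \<xi> \<beta>) (phi_set n \<xi>) = (\<lambda>\<alpha>. mult (phi n \<xi> \<alpha>) (inv_word (phi n \<xi> \<beta>))) ` \<xi>"
    by (simp add: act_def phi_set_def image_image)
  also have "\<dots> = (\<lambda>\<alpha>. phi n (act \<beta> \<xi>) (mult \<alpha> (inv_word \<beta>))) ` \<xi>"
    using * by (intro image_cong) auto
  also have "\<dots> = phi_set n (act \<beta> \<xi>)" by (simp add: act_def phi_set_def image_image)
  finally show ?thesis .
qed

lemma phi_letter_alph:
  assumes "\<Omega> \<subseteq> CC A" "invariant \<Omega>" "\<xi> \<in> \<Omega>" "\<alpha> \<in> \<xi>" "i < length \<alpha>"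
  shows "fst (phi n \<xi> \<alpha> ! i) \<in> sym_alph A n \<Omega>"
proof -
  have xC: "\<xi> \<in> CC A" using assms by auto
  have xF: "\<xi> \<subseteq> FW A" and cx: "convex \<xi>" using xC by (auto simp: CC_def)
  define s where "s = \<alpha> ! i"
  define u where "u = take i \<alpha>"
  define u' where "u' = take (Suc i) \<alpha>"
  have aF: "\<alpha> \<in> FW A" using assms xF by auto
  have uin: "u \<in> \<xi>" "u' \<in> \<xi>" unfolding u_def u'_def using convexD[OF cx assms(4)] by auto
  have uF: "u \<in> FW A" "u' \<in> FW A" using uin xF by auto
  have sA: "fst s \<in> A" using aF assms(5) unfolding s_def FW_def by (auto intro: nth_mem)
  have u'eq: "u' = u @ [s]" unfolding u'_def u_def s_def using assms(5) by (simp add: take_Suc_conv_app_nth)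
  have ru': "reduced u'" using uF FW_reduced by blast
  have m1: "mult [s] u = u'" using mult_append_reduced[of u "[s]"] u'eq ru' by simp
  have m2: "mult [inv_letter s] u' = u"
    using mult_snoc_formula[OF ru', of "inv_letter s"] u'eq by simp
  have inv1: "act u \<xi> \<in> \<Omega>" "act u' \<xi> \<in> \<Omega>" using assms(2,3) uin unfolding invariant_def by auto
  have sF: "[s] \<in> FW A" "[inv_letter s] \<in> FW A" using sA FW_single[of s A] FW_single[of "inv_letter s" A] by auto
  have pe: "phi n \<xi> \<alpha> ! i = sym_letter s (trunc n (act u' \<xi>)) (trunc n (act u \<xi>))"
    unfolding s_def u_def u'_def using assms(5) phi_nth by blast
  show ?thesis
  proof (cases "snd s")
    case True
    then have se: "s = (fst s, True)" by (cases s) auto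
    have "[s] \<in> act u \<xi>" using act_mem[OF uF(1) xF] sF m1 uin by simp
    moreover have "act [s] (act u \<xi>) = act u' \<xi>" using act_act[OF uF(1) sF(1) xF] m1 by simp
    ultimately show ?thesis unfolding sym_alph_def pe using True inv1 sA se
      by (simp add: sym_letter_def) (metis se)
  next
    case False
    then have se: "inv_letter s = (fst s, True)" by (cases s) (auto simp: inv_letter_def)
    have "[inv_letter s] \<in> act u' \<xi>" using act_mem[OF uF(2) xF] sF m2 uin by simp
    moreover have "act [inv_letter s] (act u' \<xi>) = act u \<xi>" using act_act[OF uF(2) sF(2) xF] m2 by simp
    ultimately show ?thesis unfolding sym_alph_def pe using False inv1 sA se
      by (simp add: sym_letter_def) (metis se)
  qed
qed

lemma phi_set_CC:
  assumes "\<Omega> \<subseteq> CC A" "invariant \<Omega>" "\<xi> \<in> \<Omega>"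
  shows "phi_set n \<xi> \<in> CC (sym_alph A n \<Omega>)"
proof -
  have xC: "\<xi> \<in> CC A" using assms by auto
  have xF: "\<xi> \<subseteq> FW A" and cx: "convex \<xi>" and nil: "[] \<in> \<xi>" using xC by (auto simp: CC_def)
  have "phi n \<xi> \<alpha> \<in> FW (sym_alph A n \<Omega>)" if "\<alpha> \<in> \<xi>" for \<alpha>
  proof -
    have "reduced (phi n \<xi> \<alpha>)" using that xF FW_reduced reduced_phi by blast
    moreover have "\<forall>x\<in>set (phi n \<xi> \<alpha>). fst x \<in> sym_alph A n \<Omega>"
      using phi_letter_alph[OF assms that] by (metis in_set_conv_nth length_phi)
    then have "fst ` set (phi n \<xi> \<alpha>) \<subseteq> sym_alph A n \<Omega>" by blast
    ultimately show ?thesis by (simp add: FW_def)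
  qed
  moreover have "convex (phi_set n \<xi>)"
    unfolding convex_def phi_set_def using convexD[OF cx] by (auto simp: phi_take)
  moreover have "[] \<in> phi_set n \<xi>" using nil unfolding phi_set_def by (metis image_eqI phi_Nil)
  ultimately show ?thesis unfolding CC_def phi_set_def by auto
qed




locale recon =
  fixes A :: "'a set" and \<Omega> :: "'a word set set" and n R :: nat
    and A' :: "'a sym set" and \<zeta> :: "'a sym word set"
  assumes OmC: "\<Omega> \<subseteq> CC A" and n1: "1 \<le> n" and nR: "n < R"
    and A'A: "\<And>x. x \<in> A' \<Longrightarrow> fst (snd x) \<in> A"
    and zC: "\<zeta> \<in> CC A'"
    and loc: "\<And>w. w \<in> \<zeta> \<Longrightarrow> \<exists>\<theta>\<in>\<Omega>. trunc (R - n) (act w \<zeta>) = trunc (R - n) (phi_set n \<theta>)"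
begin

definition th where "th w = (SOME \<theta>. \<theta> \<in> \<Omega> \<and> trunc (R - n) (act w \<zeta>) = trunc (R - n) (phi_set n \<theta>))"
definition xi where "xi = map pl ` \<zeta>"

lemma th: "w \<in> \<zeta> \<Longrightarrow> th w \<in> \<Omega> \<and> trunc (R - n) (act w \<zeta>) = trunc (R - n) (phi_set n (th w))"
proof -
  assume "w \<in> \<zeta>"
  then have "\<exists>\<theta>. \<theta> \<in> \<Omega> \<and> trunc (R - n) (act w \<zeta>) = trunc (R - n) (phi_set n \<theta>)"
    using loc by blast
  then show ?thesis unfolding th_def by (rule someI_ex)
qed

lemma thC: "w \<in> \<zeta> \<Longrightarrow> th w \<in> CC A"
  using th OmC by blast

lemma thF: "w \<in> \<zeta> \<Longrightarrow> th w \<subseteq> FW A"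
  using thC CC_FW by blast

lemma zF: "\<zeta> \<subseteq> FW A'" and zcx: "convex \<zeta>" and znil: "[] \<in> \<zeta>"
  using zC by (auto simp: CC_def)

lemma wF: "w \<in> \<zeta> \<Longrightarrow> w \<in> FW A'"
  using zF by blast

lemma wr: "w \<in> \<zeta> \<Longrightarrow> reduced w"
  using wF FW_reduced by blast

lemma act1: "w \<in> \<zeta> \<Longrightarrow> [t] \<in> act w \<zeta> \<longleftrightarrow> fst t \<in> A' \<and> mult [t] w \<in> \<zeta>"
  using act_mem[OF wF zF, of w "[t]"] by (simp add: FW_def)

lemma N:
  assumes w: "w \<in> \<zeta>"
  shows "[t] \<in> act w \<zeta> \<longleftrightarrow> (\<exists>s. [s] \<in> th w \<and> t = sym_letter s (trunc n (act [s] (th w))) (trunc n (th w)))"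
proof -
  let ?\<theta> = "th w"
  have e: "trunc (R - n) (act w \<zeta>) = trunc (R - n) (phi_set n ?\<theta>)" using th w by blast
  have le: "length [t] \<le> R - n" using nR by simp
  have "[t] \<in> act w \<zeta> \<longleftrightarrow> [t] \<in> trunc (R - n) (act w \<zeta>)" using le by (simp add: trunc_def)
  also have "\<dots> \<longleftrightarrow> [t] \<in> trunc (R - n) (phi_set n ?\<theta>)" using e by simp
  also have "\<dots> \<longleftrightarrow> [t] \<in> phi_set n ?\<theta>" using le by (simp add: trunc_def)
  also have "\<dots> \<longleftrightarrow> (\<exists>s. [s] \<in> ?\<theta> \<and> t = sym_letter s (trunc n (act [s] ?\<theta>)) (trunc n ?\<theta>))"
  proof
    assume "[t] \<in> phi_set n ?\<theta>"
    then obtain x where x: "x \<in> ?\<theta>" "phi n ?\<theta> x = [t]" by (auto simp: phi_set_def)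
    have "length x = length [t]" using x(2) length_phi by metis
    then obtain s where "x = [s]" by (cases x) auto
    then show "\<exists>s. [s] \<in> ?\<theta> \<and> t = sym_letter s (trunc n (act [s] ?\<theta>)) (trunc n ?\<theta>)"
    proof -
      have "[t] = [sym_letter s (trunc n (act [s] ?\<theta>)) (trunc n ?\<theta>)]"
        using x \<open>x = [s]\<close> phi_single by metis
      then show ?thesis using x \<open>x = [s]\<close> by blast
    qed
  next
    assume "\<exists>s. [s] \<in> ?\<theta> \<and> t = sym_letter s (trunc n (act [s] ?\<theta>)) (trunc n ?\<theta>)"
    then obtain s where "[s] \<in> ?\<theta>" "t = sym_letter s (trunc n (act [s] ?\<theta>)) (trunc n ?\<theta>)" by blast
    then show "[t] \<in> phi_set n ?\<theta>" unfolding phi_set_def by (metis image_eqI phi_single)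
  qed
  finally show ?thesis .
qed

lemma Npl:
  assumes "w \<in> \<zeta>" "[t] \<in> act w \<zeta>"
  shows "[pl t] \<in> th w \<and> t = sym_letter (pl t) (trunc n (act [pl t] (th w))) (trunc n (th w))"
  using N[OF assms(1)] assms(2) by (metis pl_sym)

lemma U:
  assumes "w \<in> \<zeta>" "[t1] \<in> act w \<zeta>" "[t2] \<in> act w \<zeta>" "pl t1 = pl t2"
  shows "t1 = t2"
  using Npl[OF assms(1,2)] Npl[OF assms(1,3)] assms(4) by metis

lemma mult_inv_single: "mult [inv_letter t] [t] = []"
  by (simp add: mult_def)

lemma NL:
  assumes w: "w \<in> \<zeta>" and t: "[t] \<in> act w \<zeta>"
  shows "mult [t] w \<in> \<zeta> \<and> trunc n (th (mult [t] w)) = trunc n (act [pl t] (th w))"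
proof -
  define w' where "w' = mult [t] w"
  have w': "w' \<in> \<zeta>" and tA: "fst t \<in> A'" using act1[OF w] t w'_def by auto
  have "mult [inv_letter t] w' = mult (mult [inv_letter t] [t]) w"
    unfolding w'_def using mult_assoc[of "[inv_letter t]" "[t]" w] by simp
  also have "\<dots> = w" using wr[OF w] by (simp add: mult_inv_single)
  finally have "[inv_letter t] \<in> act w' \<zeta>" using act1[OF w'] tA w by simp
  from Npl[OF w' this] have 1: "inv_letter t = sym_letter (inv_letter (pl t))
      (trunc n (act [inv_letter (pl t)] (th w'))) (trunc n (th w'))" by simp
  from Npl[OF w t] have "t = sym_letter (pl t) (trunc n (act [pl t] (th w))) (trunc n (th w))" by simp
  then have "inv_letter t = sym_letter (inv_letter (pl t)) (trunc n (th w)) (trunc n (act [pl t] (th w)))"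
    by (metis inv_sym)
  with 1 have "trunc n (th w') = trunc n (act [pl t] (th w))" using sym_letter_inj by metis
  then show ?thesis using w' w'_def by simp
qed

lemma PAR:
  assumes w: "w \<in> \<zeta>" "w \<noteq> []"
  shows "[inv_letter (last w)] \<in> act w \<zeta>"
proof -
  have "mult [inv_letter (last w)] w = butlast w" using mult_snoc_formula[OF wr[OF w(1)]] w by simp
  moreover have "butlast w \<in> \<zeta>" using convexD[OF zcx w(1)] by (simp add: butlast_conv_take)
  moreover have "fst (last w) \<in> A'" using wF[OF w(1)] w(2) by (auto simp: FW_def)
  ultimately show ?thesis using act1[OF w(1)] by simp
qed

lemma snoc_in:
  assumes "w @ [t] \<in> \<zeta>"
  shows "w \<in> \<zeta> \<and> [t] \<in> act w \<zeta> \<and> mult [t] w = w @ [t]"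
proof -
  have w: "w \<in> \<zeta>" using convexD[OF zcx assms, of "length w"] by simp
  have m: "mult [t] w = w @ [t]" using mult_append_reduced wr[OF assms] by blast
  have "fst t \<in> A'" using wF[OF assms] by (auto simp: FW_def)
  then show ?thesis using w m act1[OF w] assms by simp
qed

lemma R1: "w \<in> \<zeta> \<Longrightarrow> reduced (map pl w)"
proof (induction w rule: rev_induct)
  case (snoc t v)
  have s: "v \<in> \<zeta>" "[t] \<in> act v \<zeta>" using snoc_in[OF snoc.prems] by auto
  have rv: "reduced (map pl v)" using snoc.IH s by blast
  have rw: "reduced (v @ [t])" using wr[OF snoc.prems] .
  have "pl t \<noteq> inv_letter (pl (last v))" if "v \<noteq> []"
  proof
    assume h: "pl t = inv_letter (pl (last v))"
    have "[inv_letter (last v)] \<in> act v \<zeta>" using PAR s that by blast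
    then have "t = inv_letter (last v)" using U[OF s(1) s(2)] h by simp
    then show False using rw that by (simp add: reduced_snoc)
  qed
  then show ?case using rv by (simp add: reduced_snoc last_map)
qed simp

lemma inj:
  "w1 \<in> \<zeta> \<Longrightarrow> w2 \<in> \<zeta> \<Longrightarrow> map pl w1 = map pl w2 \<Longrightarrow> w1 = w2"
proof (induction w1 arbitrary: w2 rule: rev_induct)
  case Nil then show ?case by simp
next
  case (snoc t1 v1)
  have "w2 \<noteq> []" using snoc.prems by auto
  then obtain v2 t2 where w2: "w2 = v2 @ [t2]" by (metis rev_exhaust)
  have e: "map pl v1 = map pl v2" "pl t1 = pl t2" using snoc.prems w2 by auto
  have s1: "v1 \<in> \<zeta>" "[t1] \<in> act v1 \<zeta>" using snoc_in snoc.prems by blast+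
  have s2: "v2 \<in> \<zeta>" "[t2] \<in> act v2 \<zeta>" using snoc_in snoc.prems w2 by blast+
  have "v1 = v2" using snoc.IH s1 s2 e by blast
  then have "t1 = t2" using U[OF s1] s2 e by blast
  then show ?case using w2 \<open>v1 = v2\<close> by simp
qed

lemma Pmult:
  assumes w: "w \<in> \<zeta>" and t: "[t] \<in> act w \<zeta>"
  shows "map pl (mult [t] w) = mult [pl t] (map pl w)"
proof (cases "w \<noteq> [] \<and> last w = inv_letter t")
  case True
  then have "mult [t] w = butlast w" using mult_snoc_formula[OF wr[OF w]] by simp
  moreover have "mult [pl t] (map pl w) = butlast (map pl w)"
    using mult_snoc_formula[OF R1[OF w]] True by (simp add: last_map)
  ultimately show ?thesis by (simp add: map_butlast)
next
  case False
  then have "mult [t] w = w @ [t]" using mult_snoc_formula[OF wr[OF w], of t] by auto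
  moreover have "\<not> (map pl w \<noteq> [] \<and> last (map pl w) = inv_letter (pl t))"
  proof
    assume h: "map pl w \<noteq> [] \<and> last (map pl w) = inv_letter (pl t)"
    then have wn: "w \<noteq> []" by simp
    have "pl (inv_letter (last w)) = pl t" using h wn by (simp add: last_map)
    then have "inv_letter (last w) = t" using U[OF w PAR[OF w wn] t] by simp
    then show False using False wn by auto
  qed
  then have "mult [pl t] (map pl w) = map pl w @ [pl t]"
    using mult_snoc_formula[OF R1[OF w], of "pl t"] by auto
  ultimately show ?thesis by simp
qed

lemma xiC: "xi \<in> CC A"
proof -
  have "map pl w \<in> FW A" if w: "w \<in> \<zeta>" for w
  proof -
    have "\<forall>t\<in>set w. fst t \<in> A'" using wF[OF w] by (auto simp: FW_def)
    then have "fst ` set (map pl w) \<subseteq> A" using A'A by (auto simp: pl_def)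
    then show ?thesis using R1[OF w] by (simp add: FW_def)
  qed
  moreover have "convex xi" unfolding convex_def xi_def
    using convexD[OF zcx] by (auto simp: take_map)
  moreover have "[] \<in> xi" unfolding xi_def using znil by force
  ultimately show ?thesis unfolding CC_def xi_def by auto
qed

lemma xiF: "xi \<subseteq> FW A" using xiC CC_FW by blast

lemma alF: "w \<in> \<zeta> \<Longrightarrow> map pl w \<in> FW A"
  using xiF xi_def by blast

lemma E:
  assumes w: "w \<in> \<zeta>" and gF: "l # \<gamma>r \<in> FW A" and m: "mult (l # \<gamma>r) (map pl w) \<in> xi"
  shows "[l] \<in> th w"
proof (cases "w \<noteq> [] \<and> pl (last w) = inv_letter l")
  case True
  have "[inv_letter (last w)] \<in> act w \<zeta>" using PAR w True by blast
  from Npl[OF w this] show ?thesis using True by simp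
next
  case False
  let ?\<alpha> = "map pl w"
  have ra: "reduced ?\<alpha>" using R1 w by blast
  have rg: "reduced (l # \<gamma>r)" using gF FW_reduced by blast
  have "\<not> (?\<alpha> \<noteq> [] \<and> last ?\<alpha> = inv_letter l)" using False by (auto simp: last_map)
  then have "reduced (?\<alpha> @ l # \<gamma>r)" using ra rg by (auto simp: reduced_append)
  then have "mult (l # \<gamma>r) ?\<alpha> = ?\<alpha> @ l # \<gamma>r" by (rule mult_append_reduced)
  then have m': "?\<alpha> @ l # \<gamma>r \<in> xi" using m by simp
  have cxi: "convex xi" using xiC by (simp add: CC_def)
  have "take (Suc (length ?\<alpha>)) (?\<alpha> @ l # \<gamma>r) \<in> xi" using convexD[OF cxi m'] .
  then have "?\<alpha> @ [l] \<in> xi" by simp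
  then obtain w3 where w3: "w3 \<in> \<zeta>" "map pl w3 = ?\<alpha> @ [l]" unfolding xi_def by auto
  then have "w3 \<noteq> []" by auto
  then obtain v t where vt: "w3 = v @ [t]" by (metis rev_exhaust)
  then have "map pl v = ?\<alpha>" "pl t = l" using w3 by auto
  have sv: "v \<in> \<zeta>" "[t] \<in> act v \<zeta>" using snoc_in w3 vt by blast+
  have "v = w" using inj[OF sv(1) w] \<open>map pl v = ?\<alpha>\<close> by blast
  then show ?thesis using Npl[OF w] sv \<open>pl t = l\<close> by blast
qed

lemma L:
  "w \<in> \<zeta> \<Longrightarrow> \<gamma> \<in> FW A \<Longrightarrow> length \<gamma> \<le> n \<Longrightarrow> (\<gamma> \<in> th w \<longleftrightarrow> mult \<gamma> (map pl w) \<in> xi)"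
proof (induction \<gamma> arbitrary: w)
  case Nil
  have "[] \<in> th w" using thC[OF Nil(1)] by (simp add: CC_def)
  moreover have "map pl w \<in> xi" using Nil xi_def by blast
  ultimately show ?case using R1[OF Nil(1)] by simp
next
  case (Cons l \<gamma>r)
  note w = Cons.prems(1)
  let ?\<alpha> = "map pl w" and ?\<theta> = "th w"
  have rg: "reduced (l # \<gamma>r)" using Cons.prems FW_reduced by blast
  have lA: "fst l \<in> A" using Cons.prems by (simp add: FW_def)
  have lF: "[l] \<in> FW A" using lA FW_single by blast
  have grF: "\<gamma>r \<in> FW A" using Cons.prems(2) FW_drop[of "l # \<gamma>r" A 1] by simp
  have rgr: "reduced \<gamma>r" using grF FW_reduced by blast
  have e1: "mult \<gamma>r [l] = l # \<gamma>r" using mult_append_reduced[of "[l]" \<gamma>r] rg by simp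
  have lenr: "length \<gamma>r \<le> n" using Cons.prems by simp
  have main: "(l # \<gamma>r \<in> ?\<theta> \<longleftrightarrow> mult (l # \<gamma>r) ?\<alpha> \<in> xi)" if l: "[l] \<in> ?\<theta>"
  proof -
    define t where "t = sym_letter l (trunc n (act [l] ?\<theta>)) (trunc n ?\<theta>)"
    have t: "[t] \<in> act w \<zeta>" using N[OF w] l t_def by blast
    define w' where "w' = mult [t] w"
    have w': "w' \<in> \<zeta>" and tw': "trunc n (th w') = trunc n (act [l] ?\<theta>)"
      using NL[OF w t] unfolding w'_def t_def by auto
    have pw': "map pl w' = mult [l] ?\<alpha>" using Pmult[OF w t] unfolding w'_def t_def by simp
    have "mult \<gamma>r (map pl w') = mult (l # \<gamma>r) ?\<alpha>"
      using pw' mult_assoc[of \<gamma>r "[l]" ?\<alpha>] rgr e1 by simp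
    moreover have "\<gamma>r \<in> th w' \<longleftrightarrow> mult \<gamma>r (map pl w') \<in> xi" using Cons.IH[OF w' grF lenr] .
    moreover have "\<gamma>r \<in> th w' \<longleftrightarrow> \<gamma>r \<in> trunc n (th w')" using lenr by (simp add: trunc_def)
    moreover have "\<gamma>r \<in> trunc n (act [l] ?\<theta>) \<longleftrightarrow> \<gamma>r \<in> act [l] ?\<theta>" using lenr by (simp add: trunc_def)
    moreover have "\<gamma>r \<in> act [l] ?\<theta> \<longleftrightarrow> l # \<gamma>r \<in> ?\<theta>"
      using act_mem[OF lF thF[OF w], of \<gamma>r] grF e1 by simp
    ultimately show ?thesis using tw' by simp
  qed
  show ?case
  proof
    assume h: "l # \<gamma>r \<in> ?\<theta>"
    have "[l] \<in> ?\<theta>" using convexD[of ?\<theta> "l # \<gamma>r" 1] h thC[OF w] by (simp add: CC_def)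
    then show "mult (l # \<gamma>r) ?\<alpha> \<in> xi" using main h by blast
  next
    assume h: "mult (l # \<gamma>r) ?\<alpha> \<in> xi"
    have "[l] \<in> ?\<theta>" using E[OF w Cons.prems(2) h] .
    then show "l # \<gamma>r \<in> ?\<theta>" using main h by blast
  qed
qed

lemma Lball:
  assumes w: "w \<in> \<zeta>"
  shows "trunc n (act (map pl w) xi) = trunc n (th w)"
proof -
  have am: "\<And>\<gamma>. \<gamma> \<in> act (map pl w) xi \<longleftrightarrow> \<gamma> \<in> FW A \<and> mult \<gamma> (map pl w) \<in> xi"
    using act_mem[OF alF[OF w] xiF] .
  have "\<And>\<gamma>. length \<gamma> \<le> n \<Longrightarrow> (\<gamma> \<in> act (map pl w) xi \<longleftrightarrow> \<gamma> \<in> th w)"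
    using am L[OF w] thF[OF w] by blast
  then show ?thesis unfolding trunc_def by auto
qed

lemma R3: "w \<in> \<zeta> \<Longrightarrow> phi n xi (map pl w) = w"
proof (induction w rule: rev_induct)
  case Nil then show ?case by simp
next
  case (snoc t v)
  have s: "v \<in> \<zeta>" "[t] \<in> act v \<zeta>" "mult [t] v = v @ [t]" using snoc_in snoc.prems by blast+
  have "phi n xi (map pl (v @ [t])) = v @ [sym_letter (pl t) (trunc n (act (map pl (v @ [t])) xi)) (trunc n (act (map pl v) xi))]"
    using phi_snoc[of n xi "map pl v" "pl t"] snoc.IH s by simp
  also have "\<dots> = v @ [sym_letter (pl t) (trunc n (th (v @ [t]))) (trunc n (th v))]"
    using Lball[OF snoc.prems] Lball[OF s(1)] by simp
  also have "trunc n (th (v @ [t])) = trunc n (act [pl t] (th v))" using NL[OF s(1,2)] s(3) by simp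
  finally show ?case using Npl[OF s(1,2)] by simp
qed

lemma phi_set_xi: "phi_set n xi = \<zeta>"
proof -
  have "phi_set n xi = (\<lambda>w. phi n xi (map pl w)) ` \<zeta>"
    unfolding phi_set_def by (simp add: xi_def image_image)
  also have "\<dots> = (\<lambda>w. w) ` \<zeta>" using R3 by (intro image_cong) auto
  finally show ?thesis by simp
qed

lemma xi_in:
  assumes "\<Omega> = Omega_F A R Fs"
  shows "xi \<in> \<Omega>"
proof -
  have "trunc R (act \<beta> xi) \<noteq> B" if b: "\<beta> \<in> xi" and B: "B \<in> Fs" for \<beta> B
  proof -
    obtain w where w: "w \<in> \<zeta>" "\<beta> = map pl w" using b xi_def by auto
    have pw: "phi n xi \<beta> = w" using R3 w by simp
    have "act w \<zeta> = phi_set n (act \<beta> xi)"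
      using equivariance[OF xiF b, of n] pw phi_set_xi by simp
    moreover have t: "th w \<in> \<Omega>" "trunc (R - n) (act w \<zeta>) = trunc (R - n) (phi_set n (th w))"
      using th w by auto
    ultimately have e: "trunc (R - n) (phi_set n (act \<beta> xi)) = trunc (R - n) (phi_set n (th w))" by simp
    have tC: "th w \<in> CC A" using thC w by blast
    have bl: "trunc R (th w) \<in> balls R (CC A)" using tC by (simp add: balls_def)
    have aC: "act \<beta> xi \<in> CC A" using act_convex[OF xiC b] .
    have "ball_lift n R (trunc R (th w)) = trunc (R - n) (phi_set n (th w))"
      using ball_lift_trunc CC_FW tC nR by (metis less_imp_le)
    then have "trunc R (act \<beta> xi) = trunc R (th w)" using part_i[OF bl nR aC] e by simp
    moreover have "trunc R (th w) \<noteq> B"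
    proof -
      have "th w \<in> Omega_F A R Fs" using t assms by simp
      then have "avoids R (th w) B" using B by (simp add: Omega_F_def)
      moreover have "[] \<in> th w" using tC by (simp add: CC_def)
      ultimately show ?thesis unfolding avoids_def by force
    qed
    ultimately show ?thesis by simp
  qed
  then show ?thesis using xiC assms by (simp add: Omega_F_def avoids_def)
qed

end




lemma trunc_W: "X \<subseteq> FW B \<Longrightarrow> trunc k X \<subseteq> {xs. set xs \<subseteq> B \<times> UNIV \<and> length xs \<le> k}"
proof
  fix xs assume a: "X \<subseteq> FW B" "xs \<in> trunc k X"
  then have "xs \<in> FW B" "length xs \<le> k" by (auto simp: trunc_def)
  then have "fst ` set xs \<subseteq> B" "length xs \<le> k" by (auto simp: FW_def)
  then show "xs \<in> {xs. set xs \<subseteq> B \<times> UNIV \<and> length xs \<le> k}" by force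
qed

lemma trunc_CC: "X \<in> CC B \<Longrightarrow> trunc k X \<in> CC B"
  unfolding CC_def convex_def trunc_def by auto

lemma part_iii:
  assumes fA: "finite A" and OmC: "\<Omega> \<subseteq> CC A" and inv: "invariant \<Omega>"
    and n1: "1 \<le> n" and nR: "n < R" and Rs: "R_step A R \<Omega>"
  shows "R_step (sym_alph A n \<Omega>) (R - n) (ball_shift n \<Omega>)"
proof -
  obtain Fs where Fs: "finite Fs" "\<forall>B\<in>Fs. is_ball A R B" "\<Omega> = Omega_F A R Fs"
    using Rs by (auto simp: R_step_def)
  define A' where "A' = sym_alph A n \<Omega>"
  have A'A: "\<And>x. x \<in> A' \<Longrightarrow> fst (snd x) \<in> A" unfolding A'_def sym_alph_def by auto
  define W where "W = {xs. set xs \<subseteq> A \<times> (UNIV :: bool set) \<and> length xs \<le> n}"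
  have fW: "finite W" unfolding W_def using fA by (intro finite_lists_length_le) auto
  have "A' \<subseteq> Pow W \<times> A \<times> Pow W"
  proof
    fix x assume "x \<in> A'"
    then obtain \<xi> a where x: "x = (trunc n (act [(a, True)] \<xi>), a, trunc n \<xi>)" "\<xi> \<in> \<Omega>" "a \<in> A"
      "[(a, True)] \<in> \<xi>" unfolding A'_def sym_alph_def by blast
    have xF: "\<xi> \<subseteq> FW A" using x OmC CC_FW by blast
    have aF: "[(a, True)] \<in> FW A" using x(3) FW_single[of "(a, True)" A] by simp
    have "act [(a, True)] \<xi> \<subseteq> FW A" using act_FW[OF aF xF] .
    then have "trunc n (act [(a, True)] \<xi>) \<subseteq> W" "trunc n \<xi> \<subseteq> W"
      using trunc_W[of _ A n] xF unfolding W_def by blast+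
    then show "x \<in> Pow W \<times> A \<times> Pow W" using x(1) x(3) by simp
  qed
  moreover have "finite (Pow W \<times> A \<times> Pow W)" using fW fA by simp
  ultimately have fA': "finite A'" by (rule finite_subset)
  define W' where "W' = {xs. set xs \<subseteq> A' \<times> (UNIV :: bool set) \<and> length xs \<le> R - n}"
  have fW': "finite W'" unfolding W'_def using fA' by (intro finite_lists_length_le) auto
  define Fs' where "Fs' = {B. is_ball A' (R - n) B \<and> B \<notin> balls (R - n) (ball_shift n \<Omega>)}"
  have "Fs' \<subseteq> Pow W'"
  proof
    fix B assume "B \<in> Fs'"
    then have "B \<subseteq> FW A'" "\<forall>\<alpha>\<in>B. length \<alpha> \<le> R - n"
      unfolding Fs'_def is_ball_def CC_def by auto
    then have "trunc (R - n) B \<subseteq> W'" "trunc (R - n) B = B"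
      using trunc_W[of B A' "R - n"] unfolding W'_def trunc_def by auto
    then show "B \<in> Pow W'" by simp
  qed
  moreover have "finite (Pow W')" using fW' by simp
  ultimately have fFs': "finite Fs'" by (rule finite_subset)
  have bFs': "\<forall>B\<in>Fs'. is_ball A' (R - n) B" unfolding Fs'_def by auto
  have "ball_shift n \<Omega> = Omega_F A' (R - n) Fs'"
  proof (intro set_eqI iffI)
    fix \<zeta> assume "\<zeta> \<in> ball_shift n \<Omega>"
    then obtain \<xi> where x: "\<xi> \<in> \<Omega>" "\<zeta> = phi_set n \<xi>" by (auto simp: ball_shift_def)
    have xF: "\<xi> \<subseteq> FW A" using x OmC CC_FW by blast
    have zC: "\<zeta> \<in> CC A'" unfolding A'_def x(2) using phi_set_CC[OF OmC inv x(1)] .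
    have "trunc (R - n) (act w \<zeta>) \<in> balls (R - n) (ball_shift n \<Omega>)" if w: "w \<in> \<zeta>" for w
    proof -
      obtain \<beta> where b: "\<beta> \<in> \<xi>" "w = phi n \<xi> \<beta>" using w x by (auto simp: phi_set_def)
      have "act w \<zeta> = phi_set n (act \<beta> \<xi>)" using equivariance[OF xF b(1)] b x by simp
      moreover have "act \<beta> \<xi> \<in> \<Omega>" using inv x b unfolding invariant_def by blast
      ultimately show ?thesis unfolding balls_def ball_shift_def by blast
    qed
    then show "\<zeta> \<in> Omega_F A' (R - n) Fs'"
      using zC unfolding Omega_F_def avoids_def Fs'_def by blast
  next
    fix \<zeta> assume z: "\<zeta> \<in> Omega_F A' (R - n) Fs'"
    have zC: "\<zeta> \<in> CC A'" using z by (simp add: Omega_F_def)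
    have loc: "\<exists>\<theta>\<in>\<Omega>. trunc (R - n) (act w \<zeta>) = trunc (R - n) (phi_set n \<theta>)" if w: "w \<in> \<zeta>" for w
    proof -
      have "act w \<zeta> \<in> CC A'" using act_convex[OF zC w] .
      then have "is_ball A' (R - n) (trunc (R - n) (act w \<zeta>))"
        unfolding is_ball_def using trunc_CC by (auto simp: trunc_def)
      moreover have "trunc (R - n) (act w \<zeta>) \<notin> Fs'"
        using z w unfolding Omega_F_def avoids_def by blast
      ultimately have "trunc (R - n) (act w \<zeta>) \<in> balls (R - n) (ball_shift n \<Omega>)"
        unfolding Fs'_def by blast
      then show ?thesis unfolding balls_def ball_shift_def by auto
    qed
    interpret recon A \<Omega> n R A' \<zeta>
      using OmC n1 nR A'A zC loc by unfold_locales auto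
    have "xi \<in> \<Omega>" using xi_in Fs(3) by blast
    then show "\<zeta> \<in> ball_shift n \<Omega>" using phi_set_xi unfolding ball_shift_def by force
  qed
  then show ?thesis unfolding R_step_def A'_def[symmetric] using fFs' bFs' by blast
qed

theorem corollary3:
  fixes A :: "'a set" and \<Omega> :: "'a word set set" and n R :: nat
  assumes "finite A" and "convex_subshift A \<Omega>" and "1 \<le> n" and "1 \<le> R"
  shows "(\<forall>R' B \<xi>. B \<in> balls R' (CC A) \<longrightarrow> n < R' \<longrightarrow> \<xi> \<in> CC A \<longrightarrow>
            (trunc R' \<xi> = B \<longleftrightarrow> trunc (R' - n) (phi_set n \<xi>) = ball_lift n R' B))
       \<and> balls R (ball_shift n \<Omega>) = ball_lift n (R + n) ` balls (R + n) \<Omega>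
       \<and> (R_step A R \<Omega> \<longrightarrow> n < R \<longrightarrow>
            R_step (sym_alph A n \<Omega>) (R - n) (ball_shift n \<Omega>))
       \<and> (R_step A R \<Omega> \<longrightarrow> 1 \<le> R - 1 \<longrightarrow>
            R_step (sym_alph A (R - 1) \<Omega>) 1 (ball_shift (R - 1) \<Omega>))"
proof -
  have OmC: "\<Omega> \<subseteq> CC A" and inv: "invariant \<Omega>" using assms(2) by (auto simp: convex_subshift_def)
  have 1: "\<forall>R' B \<xi>. B \<in> balls R' (CC A) \<longrightarrow> n < R' \<longrightarrow> \<xi> \<in> CC A \<longrightarrow>
            (trunc R' \<xi> = B \<longleftrightarrow> trunc (R' - n) (phi_set n \<xi>) = ball_lift n R' B)"
    using part_i by blast
  have 2: "balls R (ball_shift n \<Omega>) = ball_lift n (R + n) ` balls (R + n) \<Omega>"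
    using part_ii[OF OmC] .
  have 3: "R_step A R \<Omega> \<longrightarrow> n < R \<longrightarrow> R_step (sym_alph A n \<Omega>) (R - n) (ball_shift n \<Omega>)"
    using part_iii[OF assms(1) OmC inv assms(3)] by blast
  have 4: "R_step A R \<Omega> \<longrightarrow> 1 \<le> R - 1 \<longrightarrow>
            R_step (sym_alph A (R - 1) \<Omega>) 1 (ball_shift (R - 1) \<Omega>)"
  proof (intro impI)
    assume h: "R_step A R \<Omega>" "1 \<le> R - 1"
    have "R - 1 < R" using h by simp
    from part_iii[OF assms(1) OmC inv h(2) this h(1)] show "R_step (sym_alph A (R - 1) \<Omega>) 1 (ball_shift (R - 1) \<Omega>)"
      using h by simp
  qed
  show ?thesis using 1 2 3 4 by blast
qed


end
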